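(* Let $X$ be a Banach space, $W\subseteq X$ a convex, symmetric and bounded set, $1<p<\infty$, and $Y=\Delta_p(W,X)$. A subset $A\subseteq W$ is a Banach-Saks subset of $X$ if and only if $A$ is a Banach-Saks subset of $Y$.
   Context: The Davis-Figiel-Johnson-Pe\l czy\'nski interpolation space $\Delta_p(W,X)$ is $\{x\in X:\|x\|_Y<\infty\}$ with $\|x\|_Y=\|(|x|_n)_n\|_{\ell_p}$, where $|x|_n=\inf\{\lambda>0: x/\lambda\in 2^nW+2^{-n}B_X\}$ and $B_X$ is the closed unit ball. A subset of a Banach space is a Banach-Saks set if every sequence in it has a subsequence whose Ces\`aro means converge in norm. *)

theory Defs
  imports "HOL-Analysis.Analysis"
begin

definition dfjp_set :: "'a::real_normed_vector set \<Rightarrow> nat \<Rightarrow> 'a set" where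
  "dfjp_set W n = {(2::real) ^ n *\<^sub>R w + (1 / 2 ^ n) *\<^sub>R b | w b. w \<in> W \<and> b \<in> cball 0 1}"

definition dfjp_gauge :: "'a::real_normed_vector set \<Rightarrow> nat \<Rightarrow> 'a \<Rightarrow> real" where
  "dfjp_gauge W n x = Inf {t::real. t > 0 \<and> (1 / t) *\<^sub>R x \<in> dfjp_set W n}"

text \<open>The space Delta_p(W,X) as a subset of X: the sequence (|x|_n)_n lies in l_p.\<close>
definition dfjp_space :: "real \<Rightarrow> 'a::real_normed_vector set \<Rightarrow> 'a set" where
  "dfjp_space p W = {x. summable (\<lambda>n. \<bar>dfjp_gauge W n x\<bar> powr p)}"

definition dfjp_norm :: "real \<Rightarrow> 'a::real_normed_vector set \<Rightarrow> 'a \<Rightarrow> real" where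
  "dfjp_norm p W x = (\<Sum>n. \<bar>dfjp_gauge W n x\<bar> powr p) powr (1 / p)"

definition cesaro :: "(nat \<Rightarrow> 'a::real_vector) \<Rightarrow> nat \<Rightarrow> 'a" where
  "cesaro s k = (1 / real (Suc k)) *\<^sub>R (\<Sum>i\<le>k. s i)"

definition banach_saks_set :: "'a::real_normed_vector set \<Rightarrow> bool" where
  "banach_saks_set A \<longleftrightarrow> (\<forall>s. (\<forall>n. s n \<in> A) \<longrightarrow>
     (\<exists>(r::nat \<Rightarrow> nat) L. strict_mono r \<and> cesaro (s \<circ> r) \<longlonglongrightarrow> L))"

definition banach_saks_set_dfjp :: "real \<Rightarrow> 'a::real_normed_vector set \<Rightarrow> 'a set \<Rightarrow> bool" where
  "banach_saks_set_dfjp p W A \<longleftrightarrow> (\<forall>s. (\<forall>n. s n \<in> A) \<longrightarrow>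
     (\<exists>(r::nat \<Rightarrow> nat) L. strict_mono r \<and> L \<in> dfjp_space p W \<and>
        (\<lambda>k. dfjp_norm p W (cesaro (s \<circ> r) k - L)) \<longlonglongrightarrow> 0))"

end

theory Submission
  imports Defs
begin

locale gloc =
  fixes W :: "'a::real_normed_vector set" and M :: real
  assumes cvx: "convex W" and sym: "\<And>x. x \<in> W \<Longrightarrow> - x \<in> W" and zero: "0 \<in> W"
    and bnd: "\<And>w. w \<in> W \<Longrightarrow> norm w \<le> M"
begin

lemma K_ball: "norm b \<le> 1 / 2 ^ n \<Longrightarrow> b \<in> dfjp_set W n"
proof -
  assume h: "norm b \<le> 1 / 2 ^ n"
  have "b = (2::real) ^ n *\<^sub>R 0 + (1 / 2 ^ n) *\<^sub>R ((2 ^ n) *\<^sub>R b)" by simp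
  moreover have "(2::real) ^ n *\<^sub>R b \<in> cball 0 1"
    using h by (simp add: field_simps)
  ultimately show ?thesis unfolding dfjp_set_def using zero by blast
qed

lemma K_W: "w \<in> W \<Longrightarrow> (2::real) ^ n *\<^sub>R w \<in> dfjp_set W n"
  unfolding dfjp_set_def by force

lemma K_convex: "convex (dfjp_set W n)"
proof (rule convexI)
  fix x y and u v :: real
  assume x: "x \<in> dfjp_set W n" and y: "y \<in> dfjp_set W n" and uv: "0 \<le> u" "0 \<le> v" "u + v = 1"
  from x obtain w1 b1 where 1: "x = (2::real) ^ n *\<^sub>R w1 + (1 / 2 ^ n) *\<^sub>R b1" "w1 \<in> W" "b1 \<in> cball 0 1"
    unfolding dfjp_set_def by blast
  from y obtain w2 b2 where 2: "y = (2::real) ^ n *\<^sub>R w2 + (1 / 2 ^ n) *\<^sub>R b2" "w2 \<in> W" "b2 \<in> cball 0 1"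
    unfolding dfjp_set_def by blast
  have "u *\<^sub>R x + v *\<^sub>R y = (2::real) ^ n *\<^sub>R (u *\<^sub>R w1 + v *\<^sub>R w2) + (1 / 2 ^ n) *\<^sub>R (u *\<^sub>R b1 + v *\<^sub>R b2)"
    unfolding 1 2 by (simp add: algebra_simps)
  moreover have "u *\<^sub>R w1 + v *\<^sub>R w2 \<in> W" using cvx 1 2 uv by (simp add: convex_def)
  moreover have "u *\<^sub>R b1 + v *\<^sub>R b2 \<in> cball 0 1" using convex_cball[of 0 1] 1 2 uv unfolding convex_def by blast
  ultimately show "u *\<^sub>R x + v *\<^sub>R y \<in> dfjp_set W n" unfolding dfjp_set_def by blast
qed

lemma K_sym: "x \<in> dfjp_set W n \<Longrightarrow> - x \<in> dfjp_set W n"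
proof -
  assume "x \<in> dfjp_set W n"
  then obtain w b where 1: "x = (2::real) ^ n *\<^sub>R w + (1 / 2 ^ n) *\<^sub>R b" "w \<in> W" "b \<in> cball 0 1"
    unfolding dfjp_set_def by blast
  have "- x = (2::real) ^ n *\<^sub>R (- w) + (1 / 2 ^ n) *\<^sub>R (- b)" using 1 by (simp add: algebra_simps)
  moreover have "- b \<in> cball 0 1" using 1 by simp
  ultimately show ?thesis using sym 1 unfolding dfjp_set_def by blast
qed

lemma K_bnd: "x \<in> dfjp_set W n \<Longrightarrow> norm x \<le> 2 ^ n * M + 1 / 2 ^ n"
proof -
  assume "x \<in> dfjp_set W n"
  then obtain w b where 1: "x = (2::real) ^ n *\<^sub>R w + (1 / 2 ^ n) *\<^sub>R b" "w \<in> W" "b \<in> cball 0 1"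
    unfolding dfjp_set_def by blast
  have "norm x \<le> norm ((2::real) ^ n *\<^sub>R w) + norm ((1 / 2 ^ n) *\<^sub>R b)" unfolding 1 by (rule norm_triangle_ineq)
  also have "\<dots> = 2 ^ n * norm w + (1 / 2 ^ n) * norm b" by simp
  also have "\<dots> \<le> 2 ^ n * M + (1 / 2 ^ n) * 1"
    using 1 bnd by (intro add_mono mult_left_mono) auto
  finally show ?thesis by simp
qed

definition "GS n x = {t::real. t > 0 \<and> (1 / t) *\<^sub>R x \<in> dfjp_set W n}"

lemma g_eq: "dfjp_gauge W n x = Inf (GS n x)"
  unfolding dfjp_gauge_def GS_def by simp

lemma GS_in: "t > 0 \<Longrightarrow> norm x \<le> t / 2 ^ n \<Longrightarrow> t \<in> GS n x"
  unfolding GS_def by (auto intro!: K_ball simp: field_simps)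

lemma GS_ne: "GS n x \<noteq> {}"
proof -
  have "0 < norm x * 2 ^ n + 1" by (simp add: add_nonneg_pos)
  thus ?thesis using GS_in[of "norm x * 2 ^ n + 1" x n] by (auto simp: field_simps)
qed

lemma GS_bdd: "bdd_below (GS n x)"
  unfolding GS_def bdd_below_def by (rule exI[of _ 0]) auto

lemma g_nonneg: "0 \<le> dfjp_gauge W n x"
  unfolding g_eq by (rule cInf_greatest[OF GS_ne]) (auto simp: GS_def)

lemma g_le: "t \<in> GS n x \<Longrightarrow> dfjp_gauge W n x \<le> t"
  unfolding g_eq by (rule cInf_lower[OF _ GS_bdd])

lemma g_upper: "dfjp_gauge W n x \<le> 2 ^ n * norm x"
proof (rule dense_ge)
  fix t assume "2 ^ n * norm x < t"
  moreover have "0 \<le> 2 ^ n * norm x" by simp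
  ultimately have "0 < t" by linarith
  with \<open>2 ^ n * norm x < t\<close> show "dfjp_gauge W n x \<le> t"
    by (intro g_le GS_in) (auto simp: field_simps mult.commute)
qed

lemma g_W: "w \<in> W \<Longrightarrow> dfjp_gauge W n w \<le> 1 / 2 ^ n"
  by (rule g_le) (simp add: GS_def K_W)

lemma g_sym: "dfjp_gauge W n (- x) = dfjp_gauge W n x"
proof -
  have "GS n (- x) = GS n x"
    unfolding GS_def using K_sym by (auto, metis minus_minus K_sym scaleR_minus_right)
  thus ?thesis by (simp add: g_eq)
qed

lemma GS_add: "a \<in> GS n x \<Longrightarrow> b \<in> GS n y \<Longrightarrow> a + b \<in> GS n (x + y)"
proof -
  assume a: "a \<in> GS n x" and b: "b \<in> GS n y"
  hence pos: "a > 0" "b > 0" and xa: "(1/a) *\<^sub>R x \<in> dfjp_set W n" and yb: "(1/b) *\<^sub>R y \<in> dfjp_set W n"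
    by (auto simp: GS_def)
  have "(1 / (a+b)) *\<^sub>R (x + y) = (a/(a+b)) *\<^sub>R ((1/a) *\<^sub>R x) + (b/(a+b)) *\<^sub>R ((1/b) *\<^sub>R y)"
    using pos by (simp add: algebra_simps divide_simps)
  moreover have "(a/(a+b)) + (b/(a+b)) = 1" using pos by (simp add: divide_simps)
  ultimately have "(1 / (a+b)) *\<^sub>R (x + y) \<in> dfjp_set W n"
    using K_convex[of n] xa yb pos unfolding convex_def by (metis less_eq_real_def divide_nonneg_pos add_pos_pos)
  thus ?thesis using pos by (simp add: GS_def)
qed

lemma g_add: "dfjp_gauge W n (x + y) \<le> dfjp_gauge W n x + dfjp_gauge W n y"
proof -
  have 1: "dfjp_gauge W n (x + y) - b \<le> dfjp_gauge W n x" if b: "b \<in> GS n y" for b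
  proof -
    have "dfjp_gauge W n (x + y) - b \<le> a" if "a \<in> GS n x" for a
      using g_le[OF GS_add[OF that b]] by simp
    thus ?thesis unfolding g_eq[of n x] by (intro cInf_greatest GS_ne)
  qed
  have "dfjp_gauge W n (x + y) - dfjp_gauge W n x \<le> b" if "b \<in> GS n y" for b
    using 1[OF that] by simp
  hence "dfjp_gauge W n (x + y) - dfjp_gauge W n x \<le> dfjp_gauge W n y"
    unfolding g_eq[of n y] by (intro cInf_greatest GS_ne)
  thus ?thesis by simp
qed

lemma g_lower: "norm x \<le> (2 ^ n * M + 1 / 2 ^ n) * dfjp_gauge W n x"
proof -
  have C: "2 ^ n * M + 1 / 2 ^ n > 0"
  proof -
    have "0 \<le> M" using bnd[OF zero] by simp
    thus ?thesis by (simp add: add_nonneg_pos)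
  qed
  have "norm x / (2 ^ n * M + 1 / 2 ^ n) \<le> t" if "t \<in> GS n x" for t
  proof -
    from that have t: "t > 0" "(1/t) *\<^sub>R x \<in> dfjp_set W n" by (auto simp: GS_def)
    have "norm x / t \<le> 2 ^ n * M + 1 / 2 ^ n" using K_bnd[OF t(2)] t by simp
    thus ?thesis using t C by (simp add: divide_simps mult.commute)
  qed
  hence "norm x / (2 ^ n * M + 1 / 2 ^ n) \<le> dfjp_gauge W n x"
    unfolding g_eq by (intro cInf_greatest GS_ne)
  thus ?thesis using C by (simp add: divide_simps mult.commute)
qed

end

lemma powr_add_le:
  fixes a b p :: real
  assumes "0 \<le> a" "0 \<le> b" "0 \<le> p"
  shows "(a + b) powr p \<le> 2 powr p * (a powr p + b powr p)"
proof -
  have "(a + b) powr p \<le> (2 * max a b) powr p"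
    using assms by (intro powr_mono2) auto
  also have "\<dots> = 2 powr p * (max a b) powr p"
    using assms by (simp add: powr_mult)
  also have "(max a b) powr p \<le> a powr p + b powr p"
    by (cases "a \<le> b") (auto simp: max_def)
  hence "2 powr p * (max a b) powr p \<le> 2 powr p * (a powr p + b powr p)"
    by (intro mult_left_mono) auto
  finally show ?thesis .
qed

lemma pow_half_powr:
  fixes p :: real
  shows "(1 / 2 ^ n) powr p = (2 powr (- p)) ^ n"
proof -
  have "(1 / 2 ^ n :: real) = 2 powr (- real n)"
    by (simp add: powr_minus powr_realpow divide_inverse)
  hence "(1 / 2 ^ n) powr p = 2 powr (- real n * p)" by (simp add: powr_powr)
  also have "\<dots> = (2 powr (- p)) powr real n" by (simp add: powr_powr mult.commute)
  also have "\<dots> = (2 powr (- p)) ^ n" by (simp add: powr_realpow)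
  finally show ?thesis .
qed

lemma cesaro_in:
  assumes "convex W" "\<And>i. t i \<in> W"
  shows "cesaro t k \<in> W"
proof -
  have "cesaro t k = (\<Sum>i\<le>k. (1 / real (Suc k)) *\<^sub>R t i)"
    unfolding cesaro_def by (simp add: scaleR_sum_right)
  also have "\<dots> \<in> W"
    by (rule convex_sum) (use assms in auto)
  finally show ?thesis .
qed


theorem lemma4p14:
  fixes W A :: "'a::banach set" and p :: real
  assumes "convex W"
    and "\<And>x. x \<in> W \<Longrightarrow> - x \<in> W"
    and "bounded W"
    and "1 < p"
    and "A \<subseteq> W"
  shows "banach_saks_set A \<longleftrightarrow> banach_saks_set_dfjp p W A"
proof (cases "A = {}")
  case True
  thus ?thesis by (simp add: banach_saks_set_def banach_saks_set_dfjp_def)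
next
  case False
  then obtain a where "a \<in> W" using assms(5) by blast
  hence zero: "0 \<in> W"
  proof -
    have "(1/2::real) *\<^sub>R a + (1/2::real) *\<^sub>R (- a) \<in> W"
      using assms(1,2) \<open>a \<in> W\<close> unfolding convex_def by (metis field_sum_of_halves less_eq_real_def zero_less_divide_1_iff zero_less_numeral)
    thus ?thesis by (simp add: scaleR_minus_right)
  qed
  obtain M where bnd: "\<And>w. w \<in> W \<Longrightarrow> norm w \<le> M"
    using assms(3) unfolding bounded_iff by blast
  interpret gloc W M by unfold_locales (use assms zero bnd in auto)
  have M0: "0 \<le> M" using bnd[OF zero] by simp
  have p0: "0 < p" using assms(4) by simp
  let ?g = "dfjp_gauge W"
  have cW: "cesaro (s \<circ> r) k \<in> W" if "\<forall>n. s n \<in> A" for s :: "nat \<Rightarrow> 'a" and r :: "nat \<Rightarrow> nat" and k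
    by (rule cesaro_in[OF assms(1)]) (use that assms(5) in auto)
  have geo: "summable (\<lambda>n. (1 / 2 ^ n :: real) powr p)"
    unfolding pow_half_powr using p0
    by (intro summable_geometric) (simp add: powr_less_one)
  show ?thesis
  proof
    assume BS: "banach_saks_set A"
    show "banach_saks_set_dfjp p W A"
      unfolding banach_saks_set_dfjp_def
    proof (intro allI impI)
      fix s :: "nat \<Rightarrow> 'a" assume s: "\<forall>n. s n \<in> A"
      then obtain r :: "nat \<Rightarrow> nat" and L where r: "strict_mono r" and lim: "cesaro (s \<circ> r) \<longlonglongrightarrow> L"
        using BS unfolding banach_saks_set_def by blast
      define c where "c = cesaro (s \<circ> r)"
      have cW': "c k \<in> W" for k unfolding c_def by (rule cW[OF s])
      have nlim: "(\<lambda>j. norm (c j - L)) \<longlonglongrightarrow> 0"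
        using tendsto_norm_zero[OF LIM_zero[OF lim]] by (simp add: c_def)
      have gL: "?g n L \<le> 1 / 2 ^ n" for n
      proof -
        have "(\<lambda>j. 1 / 2 ^ n + 2 ^ n * norm (c j - L)) \<longlonglongrightarrow> 1 / 2 ^ n + 2 ^ n * 0"
          by (intro tendsto_intros nlim)
        moreover have "?g n L \<le> 1 / 2 ^ n + 2 ^ n * norm (c j - L)" for j
        proof -
          have "?g n L = ?g n (c j + (L - c j))" by simp
          also have "\<dots> \<le> ?g n (c j) + ?g n (L - c j)" by (rule g_add)
          also have "\<dots> \<le> 1 / 2 ^ n + 2 ^ n * norm (L - c j)"
            by (intro add_mono g_W cW' g_upper)
          finally show ?thesis by (simp add: norm_minus_commute)
        qed
        ultimately show ?thesis
          using LIMSEQ_le_const[of _ "1 / 2 ^ n + 2 ^ n * 0" "?g n L"] by auto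
      qed
      have LY: "L \<in> dfjp_space p W"
        unfolding dfjp_space_def mem_Collect_eq
      proof (rule summable_comparison_test'[OF geo])
        fix n show "norm (\<bar>?g n L\<bar> powr p) \<le> (1 / 2 ^ n) powr p"
          using gL[of n] g_nonneg[of n L] p0 by (simp add: powr_mono2)
      qed
      define a where "a n k = \<bar>?g n (c k - L)\<bar> powr p" for n k
      have a0: "0 \<le> a n k" for n k by (simp add: a_def)
      have abnd: "a n k \<le> 2 powr p * (1 / 2 ^ n) powr p" for n k
      proof -
        have "?g n (c k - L) \<le> ?g n (c k) + ?g n (- L)"
          using g_add[of n "c k" "- L"] by simp
        also have "\<dots> \<le> 2 * (1 / 2 ^ n)" using g_W[OF cW', of n k] gL[of n] g_sym[of n L] by simp
        finally have "a n k \<le> (2 * (1 / 2 ^ n)) powr p"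
          unfolding a_def using g_nonneg[of n "c k - L"] p0 by (simp add: powr_mono2)
        also have "(2 * (1 / 2 ^ n)) powr p = 2 powr p * (1 / 2 ^ n :: real) powr p"
          by (rule powr_mult; simp)
        finally show ?thesis .
      qed
      have alim: "(\<lambda>k. a n k) \<longlonglongrightarrow> 0" for n
      proof -
        have "(\<lambda>k. \<bar>?g n (c k - L)\<bar>) \<longlonglongrightarrow> 0"
        proof (rule Lim_null_comparison)
          show "\<forall>\<^sub>F k in sequentially. norm \<bar>?g n (c k - L)\<bar> \<le> 2 ^ n * norm (c k - L)"
            using g_upper g_nonneg by simp
          show "(\<lambda>k. 2 ^ n * norm (c k - L)) \<longlonglongrightarrow> 0"
            using tendsto_mult_right_zero[OF nlim] by simp
        qed
        thus ?thesis unfolding a_def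
          by (intro tendsto_zero_powrI[OF _ tendsto_const _ p0]) auto
      qed
      have T: "eventually (\<lambda>k. summable (\<lambda>n. norm (a n k))) sequentially \<and>
           summable (\<lambda>n. norm ((\<lambda>_. 0::real) n)) \<and>
           ((\<lambda>k. suminf (\<lambda>n. a n k)) \<longlonglongrightarrow> suminf (\<lambda>_. 0::real))"
      proof (rule tannerys_theorem[OF alim])
        show "\<forall>\<^sub>F (n, k) in at_top \<times>\<^sub>F sequentially. norm (a n k) \<le> 2 powr p * (1 / 2 ^ n) powr p"
          using abnd a0 by (intro always_eventually) auto
        show "summable (\<lambda>n. 2 powr p * (1 / 2 ^ n :: real) powr p)"
          by (intro summable_mult geo)
      qed simp
      have "(\<lambda>k. dfjp_norm p W (c k - L)) \<longlonglongrightarrow> 0"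
        unfolding dfjp_norm_def
      proof (rule tendsto_zero_powrI[where g="\<lambda>_. 1 / p" and b="1 / p"])
        show "(\<lambda>k. \<Sum>n. \<bar>?g n (c k - L)\<bar> powr p) \<longlonglongrightarrow> 0"
          using T by (simp add: a_def)
        show "\<forall>\<^sub>F k in sequentially. 0 \<le> (\<Sum>n. \<bar>?g n (c k - L)\<bar> powr p)"
          using conjunct1[OF T] by eventually_elim (auto intro!: suminf_nonneg simp: a_def)
      qed (use p0 in auto)
      thus "\<exists>r L. strict_mono r \<and> L \<in> dfjp_space p W \<and>
              (\<lambda>k. dfjp_norm p W (cesaro (s \<circ> r) k - L)) \<longlonglongrightarrow> 0"
        using r LY unfolding c_def by blast
    qed
  next
    assume BS: "banach_saks_set_dfjp p W A"
    show "banach_saks_set A"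
      unfolding banach_saks_set_def
    proof (intro allI impI)
      fix s :: "nat \<Rightarrow> 'a" assume s: "\<forall>n. s n \<in> A"
      then obtain r :: "nat \<Rightarrow> nat" and L where r: "strict_mono r" and LY: "L \<in> dfjp_space p W"
        and lim: "(\<lambda>k. dfjp_norm p W (cesaro (s \<circ> r) k - L)) \<longlonglongrightarrow> 0"
        using BS unfolding banach_saks_set_dfjp_def by blast
      define c where "c = cesaro (s \<circ> r)"
      have cW': "c k \<in> W" for k unfolding c_def by (rule cW[OF s])
      have key: "norm (c k - L) \<le> (M + 1) * dfjp_norm p W (c k - L)" for k
      proof -
        define y where "y = c k - L"
        have sumL: "summable (\<lambda>n. \<bar>?g n L\<bar> powr p)" using LY by (simp add: dfjp_space_def)
        have sy: "summable (\<lambda>n. \<bar>?g n y\<bar> powr p)"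
        proof (rule summable_comparison_test'[OF summable_mult[OF summable_add[OF geo sumL]]])
          fix n
          have "?g n y \<le> ?g n (c k) + ?g n (- L)"
            using g_add[of n "c k" "- L"] by (simp add: y_def)
          also have "\<dots> \<le> 1 / 2 ^ n + \<bar>?g n L\<bar>" using g_W[OF cW', of n k] g_sym[of n L] by simp
          finally have "\<bar>?g n y\<bar> powr p \<le> (1 / 2 ^ n + \<bar>?g n L\<bar>) powr p"
            using g_nonneg[of n y] p0 by (simp add: powr_mono2)
          also have "\<dots> \<le> 2 powr p * ((1 / 2 ^ n) powr p + \<bar>?g n L\<bar> powr p)"
            using p0 by (intro powr_add_le) auto
          finally show "norm (\<bar>?g n y\<bar> powr p) \<le> 2 powr p * ((1 / 2 ^ n) powr p + \<bar>?g n L\<bar> powr p)"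
            by simp
        qed
        have "\<bar>?g 0 y\<bar> powr p \<le> (\<Sum>n. \<bar>?g n y\<bar> powr p)"
          using sum_le_suminf[OF sy, of "{0}"] by simp
        hence "(\<bar>?g 0 y\<bar> powr p) powr (1 / p) \<le> (\<Sum>n. \<bar>?g n y\<bar> powr p) powr (1 / p)"
          using p0 by (intro powr_mono2) auto
        hence g0: "?g 0 y \<le> dfjp_norm p W y"
          using p0 g_nonneg[of 0 y] by (simp add: powr_powr dfjp_norm_def)
        have "norm y \<le> (M + 1) * ?g 0 y" using g_lower[of y 0] by simp
        also have "\<dots> \<le> (M + 1) * dfjp_norm p W y"
          using g0 M0 by (intro mult_left_mono) auto
        finally show ?thesis by (simp add: y_def)
      qed
      have "(\<lambda>k. c k - L) \<longlonglongrightarrow> 0"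
      proof (rule Lim_null_comparison)
        show "\<forall>\<^sub>F k in sequentially. norm (c k - L) \<le> (M + 1) * dfjp_norm p W (c k - L)"
          using key by simp
        show "(\<lambda>k. (M + 1) * dfjp_norm p W (c k - L)) \<longlonglongrightarrow> 0"
          using tendsto_mult_right_zero[OF lim] by (simp add: c_def)
      qed
      hence "c \<longlonglongrightarrow> L" by (rule LIM_zero_cancel)
      thus "\<exists>r L. strict_mono r \<and> cesaro (s \<circ> r) \<longlonglongrightarrow> L" using r unfolding c_def by blast
    qed
  qed
qed

end
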